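(* Let $P_n$ be a labeled path with ad-pattern $w=w_1\cdots w_{n-1}$. Suppose that at least one of the following holds: (i) $RT(P_n)$ contains a $(1,1,3)$ sub-ribbon, i.e. $w$ contains $ddaa$ as a factor (consecutive letters); (ii) $RT(P_n)$ begins with a $(1,3)$ sub-ribbon, i.e. $w$ begins with $daa$; (iii) $RT(P_n)$ ends with a $(1,1,2)$ sub-ribbon, i.e. $w$ ends with $dda$. Then $X(P_n;\mathbf{x},q)$ is not symmetric.
   Context: A labeled path $P_n$ is the path graph with vertices $v_1,\dots,v_n$ (edges $v_iv_{i+1}$) where $v_i$ carries label $\sigma_i$ for a permutation $\sigma$ of $[n]$; vertices are identified with labels. A proper coloring is $c\colon[n]\to\{1,2,\dots\}$ with adjacent vertices colored differently; $\operatorname{asc}(c)=\#\{ij\in E: i<j,\ c(i)<c(j)\}$. The CQF is $X(P_n;\mathbf{x},q)=\sum_{c \text{ proper}} x_{c(1)}\cdots x_{c(n)}q^{\operatorname{asc}(c)}$; it is symmetric if each coefficient of $q^k$ is a symmetric function. The ad-pattern of $P_n$ is $w_1\cdots w_{n-1}$ with $w_i=a$ if $\sigma_i<\sigma_{i+1}$ and $w_i=d$ otherwise. The ribbon diagram $RT(P_n)$: start with box $1$, and for $i=1,\dots,n-1$ place box $i+1$ immediately right of box $i$ if $w_i=a$ and immediately above box $i$ if $w_i=d$. A $\beta$ sub-ribbon is a set of consecutive boxes whose shape is the ribbon with row lengths $\beta$ (bottom to top); a $(1,1,3)$ shape is a vertical column of three boxes whose top box is the leftmost of a row of three boxes. 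*)

theory Defs
  imports "HOL-Combinatorics.Permutations" "HOL-Library.FuncSet"
begin

text \<open>Labeled path: positions 1..n, the vertex at position i carries label sigma i,
  where sigma permutes {1..n}. Vertices are identified with labels; the edges are
  {sigma i, sigma (i+1)} for 1 <= i < n.\<close>

datatype adletter = A | D

definition adpattern :: "(nat \<Rightarrow> nat) \<Rightarrow> nat \<Rightarrow> adletter list" where
  "adpattern \<sigma> n = map (\<lambda>i. if \<sigma> i < \<sigma> (Suc i) then A else D) [1..<n]"

definition proper_col :: "(nat \<Rightarrow> nat) \<Rightarrow> nat \<Rightarrow> (nat \<Rightarrow> nat) \<Rightarrow> bool" where
  "proper_col \<sigma> n c \<longleftrightarrow> (\<forall>i\<in>{1..<n}. c (\<sigma> i) \<noteq> c (\<sigma> (Suc i)))"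

definition asc :: "(nat \<Rightarrow> nat) \<Rightarrow> nat \<Rightarrow> (nat \<Rightarrow> nat) \<Rightarrow> nat" where
  "asc \<sigma> n c = card {i\<in>{1..<n}.
      c (min (\<sigma> i) (\<sigma> (Suc i))) < c (max (\<sigma> i) (\<sigma> (Suc i)))}"

text \<open>Coefficient of q^k x^alpha in X(P_n; x, q), where alpha j is the exponent
  of x_j (colors are positive integers).\<close>
definition cqf_coeff :: "(nat \<Rightarrow> nat) \<Rightarrow> nat \<Rightarrow> nat \<Rightarrow> (nat \<Rightarrow> nat) \<Rightarrow> nat" where
  "cqf_coeff \<sigma> n k \<alpha> = card {c \<in> {1..n} \<rightarrow>\<^sub>E {1..}.
      proper_col \<sigma> n c \<and> asc \<sigma> n c = k \<and>
      (\<forall>j. card {v\<in>{1..n}. c v = j} = \<alpha> j)}"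

definition cqf_symmetric :: "(nat \<Rightarrow> nat) \<Rightarrow> nat \<Rightarrow> bool" where
  "cqf_symmetric \<sigma> n \<longleftrightarrow>
     (\<forall>k \<alpha> \<pi>. \<pi> permutes {1..} \<longrightarrow> cqf_coeff \<sigma> n k (\<alpha> \<circ> \<pi>) = cqf_coeff \<sigma> n k \<alpha>)"

end

theory Submission
  imports Defs
begin

lemma adp_nth:
  assumes "j < n - 1"
  shows "adpattern \<sigma> n ! j = (if \<sigma> (Suc j) < \<sigma> (Suc (Suc j)) then A else D)"
  using assms by (simp add: adpattern_def)

lemma adp_len: "length (adpattern \<sigma> n) = n - 1"
  by (simp add: adpattern_def)

lemma adpA: "j < n - 1 \<Longrightarrow> adpattern \<sigma> n ! j = A \<Longrightarrow> \<sigma> (Suc j) < \<sigma> (Suc (Suc j))"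
  by (simp add: adp_nth split: if_splits)

lemma adpD: "inj \<sigma> \<Longrightarrow> j < n - 1 \<Longrightarrow> adpattern \<sigma> n ! j = D \<Longrightarrow> \<sigma> (Suc (Suc j)) < \<sigma> (Suc j)"
  apply (simp add: adp_nth split: if_splits)
  by (metis Suc_inject inj_eq n_not_Suc_n nat_neq_iff)

lemma valley_exists:
  assumes inj: "inj \<sigma>" and "(\<exists>u v. adpattern \<sigma> n = u @ [D, D, A, A] @ v)
         \<or> (\<exists>v. adpattern \<sigma> n = [D, A, A] @ v)
         \<or> (\<exists>u. adpattern \<sigma> n = u @ [D, D, A])"
  shows "\<exists>i. 2 \<le> i \<and> i + 1 \<le> n \<and> \<sigma> i < \<sigma> (i - 1) \<and> \<sigma> i < \<sigma> (i + 1)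
     \<and> (i = 2 \<or> \<sigma> (i - 1) < \<sigma> (i - 2)) \<and> (i + 1 = n \<or> \<sigma> (i + 1) < \<sigma> (i + 2))"
  using assms(2)
proof (elim disjE exE)
  fix u v assume h: "adpattern \<sigma> n = u @ [D, D, A, A] @ v"
  let ?k = "length u"
  have len: "?k + 4 \<le> n - 1" using arg_cong[OF h, of length] by (simp add: adp_len)
  have 1: "\<sigma> (?k+2) < \<sigma> (?k+1)" using adpD[OF inj, of ?k n] h len by (simp add: nth_append)
  have 2: "\<sigma> (?k+3) < \<sigma> (?k+2)" using adpD[OF inj, of "?k+1" n] h len by (simp add: nth_append numeral_eq_Suc)
  have 3: "\<sigma> (?k+3) < \<sigma> (?k+4)" using adpA[of "?k+2" n] h len by (simp add: nth_append numeral_eq_Suc)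
  have 4: "\<sigma> (?k+4) < \<sigma> (?k+5)" using adpA[of "?k+3" n] h len by (simp add: nth_append numeral_eq_Suc)
  show ?thesis
    apply (rule exI[of _ "?k+3"])
    using 1 2 3 4 len by (auto simp: numeral_eq_Suc)
next
  fix v assume h: "adpattern \<sigma> n = [D, A, A] @ v"
  have len: "3 \<le> n - 1" using arg_cong[OF h, of length] by (simp add: adp_len)
  have 1: "\<sigma> 2 < \<sigma> 1" using adpD[OF inj, of 0 n] h len by (simp add: numeral_eq_Suc)
  have 3: "\<sigma> 2 < \<sigma> 3" using adpA[of 1 n] h len by (simp add: numeral_eq_Suc)
  have 4: "\<sigma> 3 < \<sigma> 4" using adpA[of 2 n] h len by (simp add: numeral_eq_Suc)
  show ?thesis
    apply (rule exI[of _ 2])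
    using 1 3 4 len by (auto simp: numeral_eq_Suc)
next
  fix u assume h: "adpattern \<sigma> n = u @ [D, D, A]"
  let ?k = "length u"
  have len: "?k + 3 = n - 1" using arg_cong[OF h, of length] by (simp add: adp_len)
  have 1: "\<sigma> (?k+2) < \<sigma> (?k+1)" using adpD[OF inj, of ?k n] h len by (simp add: nth_append)
  have 2: "\<sigma> (?k+3) < \<sigma> (?k+2)" using adpD[OF inj, of "?k+1" n] h len by (simp add: nth_append numeral_eq_Suc)
  have 3: "\<sigma> (?k+3) < \<sigma> (?k+4)" using adpA[of "?k+2" n] h len by (simp add: nth_append numeral_eq_Suc)
  have nn: "n = ?k + 4" using len by simp
  show ?thesis
    apply (rule exI[of _ "?k+3"])
    unfolding nn using 1 2 3 by (auto simp: numeral_eq_Suc)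
qed

lemma asc_full:
  assumes "asc \<sigma> n c = n - 1" "p \<in> {1..<n}"
  shows "c (min (\<sigma> p) (\<sigma> (Suc p))) < c (max (\<sigma> p) (\<sigma> (Suc p)))"
proof -
  let ?S = "{i\<in>{1..<n}. c (min (\<sigma> i) (\<sigma> (Suc i))) < c (max (\<sigma> i) (\<sigma> (Suc i)))}"
  have "?S = {1..<n}"
    by (rule card_subset_eq) (use assms(1) in \<open>auto simp: asc_def\<close>)
  then show ?thesis using assms(2) by blast
qed

lemma asc_full2:
  assumes "\<And>p. p \<in> {1..<n} \<Longrightarrow> c (min (\<sigma> p) (\<sigma> (Suc p))) < c (max (\<sigma> p) (\<sigma> (Suc p)))"
  shows "asc \<sigma> n c = n - 1"
proof -
  have "{i\<in>{1..<n}. c (min (\<sigma> i) (\<sigma> (Suc i))) < c (max (\<sigma> i) (\<sigma> (Suc i)))} = {1..<n}"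
    using assms by blast
  then show ?thesis by (simp add: asc_def)
qed

theorem proposition4p5:
  fixes \<sigma> :: "nat \<Rightarrow> nat" and n :: nat
  assumes "\<sigma> permutes {1..n}"
    and "(\<exists>u v. adpattern \<sigma> n = u @ [D, D, A, A] @ v)
         \<or> (\<exists>v. adpattern \<sigma> n = [D, A, A] @ v)
         \<or> (\<exists>u. adpattern \<sigma> n = u @ [D, D, A])"
  shows "\<not> cqf_symmetric \<sigma> n"
proof
  assume sym: "cqf_symmetric \<sigma> n"
  note perm = assms(1)
  have inj: "inj \<sigma>" using perm permutes_inj by blast
  have S: "\<sigma> p \<in> {1..n} \<longleftrightarrow> p \<in> {1..n}" for p using permutes_in_image[OF perm] .
  have ip: "inv \<sigma> (\<sigma> p) = p" for p using permutes_inverses(2)[OF perm] .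
  have pi: "\<sigma> (inv \<sigma> v) = v" for v using permutes_inverses(1)[OF perm] .
  obtain i where i: "2 \<le> i" "i + 1 \<le> n" "\<sigma> i < \<sigma> (i - 1)" "\<sigma> i < \<sigma> (i + 1)"
     "i = 2 \<or> \<sigma> (i - 1) < \<sigma> (i - 2)" "i + 1 = n \<or> \<sigma> (i + 1) < \<sigma> (i + 2)"
    using valley_exists[OF inj assms(2)] by blast
  define M where "M = {p\<in>{1..n}. (1<p \<longrightarrow> \<sigma> p < \<sigma> (p-1)) \<and> (p<n \<longrightarrow> \<sigma> p < \<sigma> (Suc p))}"
  define g where "g p = (if p = i then 1 else if p = i-1 \<or> p = i+1 \<or> p \<in> M then 2 else \<sigma> p + 2)" for p
  define c where "c = restrict (\<lambda>v. g (inv \<sigma> v)) {1..n}"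
  define \<alpha> where "\<alpha> j = card {v\<in>{1..n}. c v = j}" for j
  have finM: "finite M" unfolding M_def by auto
  have iM: "i \<in> M" using i unfolding M_def by auto
  have cs: "c (\<sigma> p) = g p" if "p \<in> {1..n}" for p
    using that S ip unfolding c_def by auto
  have s1: "\<sigma> p \<ge> 1" if "p \<in> {1..n}" for p using S[of p] that by auto
  have key: "g x < g y" if xy: "x \<in> {1..n}" "y \<in> {1..n}" "y = Suc x \<or> x = Suc y" "\<sigma> x < \<sigma> y" for x y
  proof -
    have yM: "y \<notin> M" using xy unfolding M_def by auto
    have yi: "y \<noteq> i" using yM iM by auto
    show ?thesis
    proof (cases "y = i - 1 \<or> y = i + 1")
      case True
      have "x = i"
      proof (rule ccontr)
        assume "x \<noteq> i"
        then have "(y = i - 1 \<and> x = i - 2) \<or> (y = i + 1 \<and> x = i + 2)" using True xy(3) i(1) by auto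
        then show False using xy i by auto
      qed
      then show ?thesis using True yi unfolding g_def by auto
    next
      case False
      then have "g y = \<sigma> y + 2" using yi yM unfolding g_def by auto
      moreover have "g x \<le> max 2 (\<sigma> x + 2)" unfolding g_def by auto
      ultimately show ?thesis using xy(4) s1[OF xy(2)] by auto
    qed
  qed
  have edge: "c (min (\<sigma> p) (\<sigma> (Suc p))) < c (max (\<sigma> p) (\<sigma> (Suc p)))" if p: "p \<in> {1..<n}" for p
  proof -
    have pp: "p \<in> {1..n}" "Suc p \<in> {1..n}" using p by auto
    have "\<sigma> p \<noteq> \<sigma> (Suc p)" using inj by (auto dest: injD)
    then consider "\<sigma> p < \<sigma> (Suc p)" | "\<sigma> (Suc p) < \<sigma> p" by linarith
    then show ?thesis
    proof cases
      case 1
      then show ?thesis using key[of p "Suc p"] pp cs by (simp add: min_def max_def)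
    next
      case 2
      then show ?thesis using key[of "Suc p" p] pp cs by (simp add: min_def max_def)
    qed
  qed
  have ascc: "asc \<sigma> n c = n - 1" by (rule asc_full2) (rule edge)
  have proper: "proper_col \<sigma> n c"
    unfolding proper_col_def
  proof
    fix p assume "p \<in> {1..<n}"
    from edge[OF this] show "c (\<sigma> p) \<noteq> c (\<sigma> (Suc p))"
      by (cases "\<sigma> p \<le> \<sigma> (Suc p)") (auto simp: min_def max_def)
  qed
  have cPi: "c \<in> {1..n} \<rightarrow>\<^sub>E {1..}"
    unfolding c_def restrict_PiE_iff g_def by auto
  let ?Set = "\<lambda>\<beta>. {c \<in> {1..n} \<rightarrow>\<^sub>E {1..}.
      proper_col \<sigma> n c \<and> asc \<sigma> n c = n - 1 \<and>
      (\<forall>j. card {v\<in>{1..n}. c v = j} = \<beta> j)}"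
  have cin: "c \<in> ?Set \<alpha>" using cPi proper ascc unfolding \<alpha>_def by auto
  have fin: "finite (?Set \<alpha>)"
  proof (rule finite_subset)
    show "?Set \<alpha> \<subseteq> {1..n} \<rightarrow>\<^sub>E c ` {1..n}"
    proof
      fix c' assume c': "c' \<in> ?Set \<alpha>"
      have "c' v \<in> c ` {1..n}" if v: "v \<in> {1..n}" for v
      proof -
        have "card {u\<in>{1..n}. c' u = c' v} > 0" using v by (auto simp: card_gt_0_iff)
        then have "\<alpha> (c' v) > 0" using c' by auto
        then have "{u\<in>{1..n}. c u = c' v} \<noteq> {}" unfolding \<alpha>_def by (metis card.empty less_irrefl)
        then obtain u where "u \<in> {1..n}" "c u = c' v" by blast
        then show ?thesis by (metis image_eqI)
      qed
      then show "c' \<in> {1..n} \<rightarrow>\<^sub>E c ` {1..n}" using c' by (auto simp: PiE_iff)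
    qed
  qed (intro finite_PiE; simp)
  have pos: "cqf_coeff \<sigma> n (n - 1) \<alpha> > 0"
    unfolding cqf_coeff_def using fin cin by (auto simp: card_gt_0_iff)
  have G2: "{p\<in>{1..n}. g p = 2} = (M - {i}) \<union> {i - 1, i + 1}"
  proof -
    have "i - 1 \<noteq> i" "i + 1 \<noteq> i" using i by auto
    moreover have "g p \<noteq> 2" if "p \<in> {1..n}" "p \<noteq> i" "p \<noteq> i - 1" "p \<noteq> i + 1" "p \<notin> M" for p
      using that s1[of p] unfolding g_def by auto
    moreover have Mn: "M \<subseteq> {1..n}" unfolding M_def by auto
    moreover have "g i = 1" unfolding g_def by simp
    moreover have "g p = 2" if "p \<noteq> i" "p = i - 1 \<or> p = i + 1 \<or> p \<in> M" for p
      using that unfolding g_def by auto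
    moreover have "i - 1 \<in> {1..n}" "i + 1 \<in> {1..n}" using i by auto
    ultimately show ?thesis
    proof (intro set_eqI iffI)
      fix p assume "p \<in> {p\<in>{1..n}. g p = 2}"
      then have p: "p \<in> {1..n}" "g p = 2" by auto
      have "p \<noteq> i" using p \<open>g i = 1\<close> by auto
      then show "p \<in> (M - {i}) \<union> {i - 1, i + 1}"
        using p \<open>\<And>p. \<lbrakk>p \<in> {1..n}; p \<noteq> i; p \<noteq> i - 1; p \<noteq> i + 1; p \<notin> M\<rbrakk> \<Longrightarrow> g p \<noteq> 2\<close>
        by blast
    next
      fix p assume p: "p \<in> (M - {i}) \<union> {i - 1, i + 1}"
      then have "p \<noteq> i" using \<open>i - 1 \<noteq> i\<close> \<open>i + 1 \<noteq> i\<close> by auto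
      moreover have "p \<in> {1..n}" using p Mn \<open>i - 1 \<in> {1..n}\<close> \<open>i + 1 \<in> {1..n}\<close> by blast
      moreover have "p = i - 1 \<or> p = i + 1 \<or> p \<in> M" using p by blast
      ultimately show "p \<in> {p\<in>{1..n}. g p = 2}"
        using \<open>\<And>p. \<lbrakk>p \<noteq> i; p = i - 1 \<or> p = i + 1 \<or> p \<in> M\<rbrakk> \<Longrightarrow> g p = 2\<close> by blast
    qed
  qed
  have nM: "i - 1 \<notin> M" "i + 1 \<notin> M"
    using i unfolding M_def by auto
  have cardG2: "card {p\<in>{1..n}. g p = 2} = card M + 1"
  proof -
    have "card ((M - {i}) \<union> {i - 1, i + 1}) = card (M - {i}) + card {i - 1, i + 1}"
      by (rule card_Un_disjoint) (use finM nM in auto)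
    also have "card {i - 1, i + 1} = 2" using i by auto
    also have "card (M - {i}) = card M - 1" using iM finM by auto
    finally have cc: "card ((M - {i}) \<union> {i - 1, i + 1}) = card M - 1 + 2" .
    have cM: "card M \<ge> 1" using iM finM by (metis One_nat_def Suc_leI card_gt_0_iff empty_iff)
    show ?thesis unfolding G2 using cc cM by linarith
  qed
  have V2: "{v\<in>{1..n}. c v = 2} = \<sigma> ` {p\<in>{1..n}. g p = 2}"
  proof
    show "{v\<in>{1..n}. c v = 2} \<subseteq> \<sigma> ` {p\<in>{1..n}. g p = 2}"
    proof
      fix v assume v: "v \<in> {v\<in>{1..n}. c v = 2}"
      then have "inv \<sigma> v \<in> {1..n}" using S[of "inv \<sigma> v"] pi by auto
      then show "v \<in> \<sigma> ` {p\<in>{1..n}. g p = 2}" using v cs[of "inv \<sigma> v"] pi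
        by (metis (mono_tags, lifting) image_eqI mem_Collect_eq)
    qed
  qed (use cs S in auto)
  have a2: "\<alpha> 2 = card M + 1"
    unfolding \<alpha>_def V2 using cardG2 card_image[OF inj_on_subset[OF inj subset_UNIV]] by metis
  define \<pi> :: "nat \<Rightarrow> nat" where "\<pi> = transpose 1 2"
  have \<pi>p: "\<pi> permutes {1..}" unfolding \<pi>_def by (rule permutes_swap_id) auto
  have a1: "(\<alpha> \<circ> \<pi>) 1 = card M + 1" using a2 unfolding \<pi>_def by simp
  have empty: "?Set (\<alpha> \<circ> \<pi>) = {}"
  proof (rule ccontr)
    assume "?Set (\<alpha> \<circ> \<pi>) \<noteq> {}"
    then obtain c' where c': "c' \<in> ?Set (\<alpha> \<circ> \<pi>)" by blast
    then have ac: "asc \<sigma> n c' = n - 1" and cp: "c' \<in> {1..n} \<rightarrow>\<^sub>E {1..}" by auto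
    have ge1: "c' v \<ge> 1" if "v \<in> {1..n}" for v using cp that by (auto simp: PiE_iff)
    have card1: "card {v\<in>{1..n}. c' v = 1} = card M + 1" using c' a1 by auto
    have sub: "{v\<in>{1..n}. c' v = 1} \<subseteq> \<sigma> ` M"
    proof
      fix v assume v: "v \<in> {v\<in>{1..n}. c' v = 1}"
      define p where "p = inv \<sigma> v"
      have pv: "\<sigma> p = v" unfolding p_def by (rule pi)
      have p: "p \<in> {1..n}" using v S[of p] pv by auto
      have "p \<in> M"
        unfolding M_def
      proof (intro CollectI conjI impI)
        show "p \<in> {1..n}" by (rule p)
      next
        assume "1 < p"
        then have q: "p - 1 \<in> {1..<n}" "Suc (p - 1) = p" using p by auto
        have e: "c' (min (\<sigma> (p-1)) (\<sigma> p)) < c' (max (\<sigma> (p-1)) (\<sigma> p))"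
          using asc_full[OF ac q(1)] q(2) by simp
        have ne: "\<sigma> (p-1) \<noteq> \<sigma> p" using inj q(2) by (metis injD n_not_Suc_n)
        have "\<not> \<sigma> (p-1) < \<sigma> p"
        proof
          assume "\<sigma> (p-1) < \<sigma> p"
          then have "c' (\<sigma> (p-1)) < c' (\<sigma> p)" using e by (simp add: min_def max_def)
          moreover have "c' (\<sigma> (p-1)) \<ge> 1" using ge1 S q by auto
          ultimately show False using v pv by auto
        qed
        then show "\<sigma> p < \<sigma> (p - 1)" using ne by linarith
      next
        assume "p < n"
        then have q: "p \<in> {1..<n}" using p by auto
        have e: "c' (min (\<sigma> p) (\<sigma> (Suc p))) < c' (max (\<sigma> p) (\<sigma> (Suc p)))"
          using asc_full[OF ac q] by simp
        have ne: "\<sigma> (Suc p) \<noteq> \<sigma> p" using inj by (metis injD n_not_Suc_n)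
        have "\<not> \<sigma> (Suc p) < \<sigma> p"
        proof
          assume "\<sigma> (Suc p) < \<sigma> p"
          then have "c' (\<sigma> (Suc p)) < c' (\<sigma> p)" using e by (simp add: min_def max_def)
          moreover have "c' (\<sigma> (Suc p)) \<ge> 1" using ge1 S q by auto
          ultimately show False using v pv by auto
        qed
        then show "\<sigma> p < \<sigma> (Suc p)" using ne by linarith
      qed
      then show "v \<in> \<sigma> ` M" using pv by blast
    qed
    have "card {v\<in>{1..n}. c' v = 1} \<le> card (\<sigma> ` M)"
      by (rule card_mono) (use finM sub in auto)
    also have "\<dots> \<le> card M" by (rule card_image_le[OF finM])
    finally show False using card1 by simp
  qed
  have "cqf_coeff \<sigma> n (n - 1) (\<alpha> \<circ> \<pi>) = cqf_coeff \<sigma> n (n - 1) \<alpha>"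
    using sym \<pi>p unfolding cqf_symmetric_def by blast
  moreover have "cqf_coeff \<sigma> n (n - 1) (\<alpha> \<circ> \<pi>) = 0"
    unfolding cqf_coeff_def empty by (rule card.empty)
  ultimately show False using pos by simp
qed

end
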